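(* For integers $m\ge 2$ and $n\ge 2$, let $m_0=\min\{k\in\mathbb{N} : m\le \tfrac12(k^3-k^2)\}$ and $n_0=\min\{k\in\mathbb{N}: n\le\tfrac12(k^3-k^2)\}$. Then $\chi_L(P_m+P_n)=m_0+n_0$.
   Context: All graphs are finite and simple. $P_n$ is the path on $n$ vertices. A proper $k$-coloring of $G$ is a map from $V(G)$ onto $[k]=\{1,\dots,k\}$ with adjacent vertices receiving different colors. For a connected graph $G$ with proper $k$-coloring $f$ and color classes $V_i=f^{-1}(i)$, the color code of $v$ is $(d(v,V_1),\dots,d(v,V_k))$ where $d(v,S)=\min_{x\in S}d(v,x)$; $f$ is a locating coloring if distinct vertices have distinct color codes, and $\chi_L(G)$ is the minimum number of colors in a locating coloring of $G$. The join $G_1+G_2$ is the disjoint union of $G_1$ and $G_2$ together with all edges joining a vertex of $G_1$ to a vertex of $G_2$. *)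

theory Defs
  imports Main "HOL-Library.Extended_Nat"
begin

text \<open>A finite simple graph is given by a vertex set V and a symmetric,
irreflexive adjacency relation E (only its restriction to V matters).\<close>

definition simple_graph :: "'a set \<Rightarrow> ('a \<Rightarrow> 'a \<Rightarrow> bool) \<Rightarrow> bool" where
  "simple_graph V E \<longleftrightarrow> finite V \<and> (\<forall>x y. E x y \<longrightarrow> E y x) \<and> (\<forall>x. \<not> E x x)"

fun walk :: "'a set \<Rightarrow> ('a \<Rightarrow> 'a \<Rightarrow> bool) \<Rightarrow> 'a list \<Rightarrow> bool" where
  "walk V E [] = False"
| "walk V E [x] = (x \<in> V)"
| "walk V E (x # y # xs) = (x \<in> V \<and> E x y \<and> walk V E (y # xs))"

definition connected_graph :: "'a set \<Rightarrow> ('a \<Rightarrow> 'a \<Rightarrow> bool) \<Rightarrow> bool" where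
  "connected_graph V E \<longleftrightarrow> V \<noteq> {} \<and>
     (\<forall>u\<in>V. \<forall>v\<in>V. \<exists>xs. walk V E xs \<and> hd xs = u \<and> last xs = v)"

definition gdist :: "'a set \<Rightarrow> ('a \<Rightarrow> 'a \<Rightarrow> bool) \<Rightarrow> 'a \<Rightarrow> 'a \<Rightarrow> nat" where
  "gdist V E u v = (LEAST n. \<exists>xs. walk V E xs \<and> hd xs = u \<and> last xs = v \<and> length xs = n + 1)"

definition setdist :: "'a set \<Rightarrow> ('a \<Rightarrow> 'a \<Rightarrow> bool) \<Rightarrow> 'a \<Rightarrow> 'a set \<Rightarrow> nat" where
  "setdist V E v S = Min (gdist V E v ` S)"

definition proper_coloring :: "'a set \<Rightarrow> ('a \<Rightarrow> 'a \<Rightarrow> bool) \<Rightarrow> nat \<Rightarrow> ('a \<Rightarrow> nat) \<Rightarrow> bool" where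
  "proper_coloring V E k f \<longleftrightarrow> f ` V = {1..k} \<and>
     (\<forall>u\<in>V. \<forall>v\<in>V. E u v \<longrightarrow> f u \<noteq> f v)"

definition color_class :: "'a set \<Rightarrow> ('a \<Rightarrow> nat) \<Rightarrow> nat \<Rightarrow> 'a set" where
  "color_class V f i = {x \<in> V. f x = i}"

definition color_code :: "'a set \<Rightarrow> ('a \<Rightarrow> 'a \<Rightarrow> bool) \<Rightarrow> nat \<Rightarrow> ('a \<Rightarrow> nat) \<Rightarrow> 'a \<Rightarrow> nat list" where
  "color_code V E k f v = map (\<lambda>i. setdist V E v (color_class V f i)) [1..<k+1]"

definition locating_coloring :: "'a set \<Rightarrow> ('a \<Rightarrow> 'a \<Rightarrow> bool) \<Rightarrow> nat \<Rightarrow> ('a \<Rightarrow> nat) \<Rightarrow> bool" where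
  "locating_coloring V E k f \<longleftrightarrow> proper_coloring V E k f \<and> inj_on (color_code V E k f) V"

definition locating_chromatic_number :: "'a set \<Rightarrow> ('a \<Rightarrow> 'a \<Rightarrow> bool) \<Rightarrow> nat" where
  "locating_chromatic_number V E = (LEAST k. \<exists>f. locating_coloring V E k f)"

definition path_V :: "nat \<Rightarrow> nat set" where
  "path_V n = {0..<n}"

definition path_E :: "nat \<Rightarrow> nat \<Rightarrow> bool" where
  "path_E i j \<longleftrightarrow> i + 1 = j \<or> j + 1 = i"

definition join_V :: "'a set \<Rightarrow> 'b set \<Rightarrow> ('a + 'b) set" where
  "join_V V1 V2 = Inl ` V1 \<union> Inr ` V2"

fun join_E :: "('a \<Rightarrow> 'a \<Rightarrow> bool) \<Rightarrow> ('b \<Rightarrow> 'b \<Rightarrow> bool) \<Rightarrow> ('a + 'b) \<Rightarrow> ('a + 'b) \<Rightarrow> bool" where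
  "join_E E1 E2 (Inl x) (Inl y) = E1 x y"
| "join_E E1 E2 (Inr x) (Inr y) = E2 x y"
| "join_E E1 E2 (Inl x) (Inr y) = True"
| "join_E E1 E2 (Inr x) (Inl y) = True"

end

theory Submission
  imports Defs
begin


fun win :: "'a list \<Rightarrow> ('a\<times>'a\<times>'a) list" where
  "win (a#b#c#r) = (a,b,c) # win (b#c#r)"
| "win _ = []"

definition refl :: "nat list \<Rightarrow> nat list" where
  "refl xs = xs!1 # xs @ [xs!(length xs - 2)]"

definition nrm :: "nat\<times>nat\<times>nat \<Rightarrow> nat \<times> nat set" where
  "nrm t = (case t of (a,b,c) \<Rightarrow> (b,{a,c}))"

definition valid :: "nat list \<Rightarrow> bool" where
  "valid xs \<longleftrightarrow> 2 \<le> length xs \<and> successively (\<noteq>) xs \<and> distinct (map nrm (win (refl xs)))"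

lemma win_Cons2: "win (a # b # xs) = (if xs = [] then [] else (a,b,hd xs) # win (b # xs))"
  by (cases xs) auto

lemma win_set: "t \<in> set (win xs) \<Longrightarrow> fst t \<in> set xs \<and> fst (snd t) \<in> set xs \<and> snd (snd t) \<in> set xs"
  by (induction xs rule: win.induct) auto

lemma win_length: "length (win xs) = length xs - 2"
  by (induction xs rule: win.induct) auto

lemma win_nth: "i + 2 < length xs \<Longrightarrow> win xs ! i = (xs!i, xs!(i+1), xs!(i+2))"
proof (induction xs arbitrary: i rule: win.induct)
  case (1 a b c r)
  then show ?case by (cases i) auto
qed auto

lemma win_map: "win (map f xs) = map (\<lambda>(a,b,c). (f a, f b, f c)) (win xs)"
  by (induction xs rule: win.induct) auto

fun bl :: "(nat\<times>nat) list \<Rightarrow> nat \<Rightarrow> (nat\<times>nat) list" where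
  "bl [] f = []"
| "bl [(a,b)] f = [(b,f)]"
| "bl ((a,b)#(c,d)#r) f = (b,c) # bl ((c,d)#r) f"

lemma bl_Cons: "bl ((a,b)#r) f = (b, case r of [] \<Rightarrow> f | p#_ \<Rightarrow> fst p) # bl r f"
  by (cases r) auto

lemma bl_append: "ys \<noteq> [] \<Longrightarrow> bl (xs @ ys) f = bl xs (fst (hd ys)) @ bl ys f"
proof (induction xs)
  case (Cons p xs)
  obtain a b where p: "p = (a,b)" by force
  show ?case using Cons by (cases xs) (auto simp: p bl_Cons split: list.splits)
qed auto

fun bw :: "nat \<Rightarrow> nat \<Rightarrow> (nat\<times>nat) list \<Rightarrow> nat \<Rightarrow> (nat\<times>nat\<times>nat) list" where
  "bw z u [] f = []"
| "bw z u ((a,b)#r) f = (if a = b then [(u,a,z)] else [(u,a,b),(a,b,z)])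
      @ [(b,z,case r of [] \<Rightarrow> f | p#_ \<Rightarrow> fst p)] @ bw z z r f"

fun Tl :: "nat \<Rightarrow> (nat\<times>nat) list \<Rightarrow> nat list" where
  "Tl z [] = []"
| "Tl z ((a,b)#r) = (if a = b then [a] else [a,b]) @ z # Tl z r"

lemma Tl_append: "Tl z (xs @ ys) = Tl z xs @ Tl z ys"
  by (induction xs) auto

lemma hd_Tl: "Tl z (p # r) \<noteq> [] \<and> hd (Tl z (p#r)) = fst p"
  by (cases p) auto

lemma win_Tl: "Q \<noteq> [] \<Longrightarrow>
  win (u # Tl z rs @ Q) = bw z u rs (hd Q) @ win ((if rs = [] then u else z) # Q)"
proof (induction rs arbitrary: u)
  case Nil then show ?case by simp
next
  case (Cons p r)
  obtain a b where p: "p = (a,b)" by force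
  have hdr: "hd (Tl z r @ Q) = (case r of [] \<Rightarrow> hd Q | q#_ \<Rightarrow> fst q)"
    using hd_Tl by (cases r) auto
  have ne: "Tl z r @ Q \<noteq> []" using Cons.prems by simp
  show ?case
    using Cons.IH[OF Cons.prems, of z] ne hdr
    by (auto simp: p win_Cons2 split: list.splits)
qed


definition Es :: "nat \<Rightarrow> nat\<times>nat \<Rightarrow> (nat \<times> nat set) set" where
  "Es z p = (case p of (a,b) \<Rightarrow> if a = b then {(a,{z})} else {(a,{z,b}),(b,{a,z})})"

lemma bw_set: "set (map nrm (bw z z rs f)) = (\<Union>p\<in>set rs. Es z p) \<union> (\<lambda>p. (z, {fst p, snd p})) ` set (bl rs f)"
proof (induction rs)
  case (Cons p r)
  obtain a b where p: "p = (a,b)" by force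
  show ?case using Cons by (auto simp: p bl_Cons nrm_def Es_def)
qed simp

lemma Es_center: "x \<in> Es z p \<Longrightarrow> fst p \<noteq> z \<Longrightarrow> snd p \<noteq> z \<Longrightarrow> fst x \<noteq> z"
  by (cases x; cases p) (auto simp: Es_def split: if_splits)

lemma nrm_simp[simp]: "nrm (x,y,w) = (y,{x,w})" by (simp add: nrm_def)

lemma Es_dec: "x \<in> Es z p \<Longrightarrow> fst p \<noteq> z \<Longrightarrow> snd p \<noteq> z \<Longrightarrow> insert (fst x) (snd x - {z}) = {fst p, snd p}"
  by (cases p) (auto simp: Es_def split: if_splits)

lemma Es_disj: "x \<in> Es z p \<Longrightarrow> x \<in> Es z q \<Longrightarrow> fst p \<noteq> z \<Longrightarrow> snd p \<noteq> z \<Longrightarrow> fst q \<noteq> z \<Longrightarrow> snd q \<noteq> z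
   \<Longrightarrow> {fst p, snd p} = {fst q, snd q}"
  using Es_dec[of x z p] Es_dec[of x z q] by simp

lemma bw_distinct:
  assumes "\<forall>p\<in>set rs. fst p \<noteq> z \<and> snd p \<noteq> z"
    "distinct (map (\<lambda>p. {fst p, snd p}) rs)"
    "distinct (map (\<lambda>p. {fst p, snd p}) (bl rs f))"
  shows "distinct (map nrm (bw z z rs f))"
  using assms
proof (induction rs)
  case (Cons p r)
  obtain a b where p: "p = (a,b)" by force
  let ?nx = "case r of [] \<Rightarrow> f | q#_ \<Rightarrow> fst q"
  have IH: "distinct (map nrm (bw z z r f))"
    using Cons by (auto simp: p bl_Cons)
  have S: "set (map nrm (bw z z r f)) = (\<Union>p\<in>set r. Es z p) \<union> (\<lambda>p. (z, {fst p, snd p})) ` set (bl r f)"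
    by (rule bw_set)
  have ab: "a \<noteq> z" "b \<noteq> z" using Cons.prems(1) p by auto
  have notin: "{a,b} \<notin> (\<lambda>p. {fst p, snd p}) ` set r" using Cons.prems(2) p by auto
  have notin2: "{b,?nx} \<notin> (\<lambda>p. {fst p, snd p}) ` set (bl r f)"
    using Cons.prems(3) p by (auto simp: bl_Cons)
  have E1: "x \<notin> set (map nrm (bw z z r f))" if "x \<in> Es z (a,b)" for x
  proof
    assume x: "x \<in> set (map nrm (bw z z r f))"
    have fx: "fst x \<noteq> z" using Es_center[OF that] ab by simp
    from x S have "x \<in> (\<Union>p\<in>set r. Es z p) \<or> x \<in> (\<lambda>p. (z, {fst p, snd p})) ` set (bl r f)" by blast
    with fx have "\<exists>q\<in>set r. x \<in> Es z q" by force
    then obtain q where q: "q \<in> set r" "x \<in> Es z q" by blast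
    have "{a,b} = {fst q, snd q}" using Es_disj[OF that q(2)] ab Cons.prems(1) q(1) by auto
    then show False using notin q(1) by auto
  qed
  have E2: "(z,{b,?nx}) \<notin> set (map nrm (bw z z r f))"
  proof
    assume x: "(z,{b,?nx}) \<in> set (map nrm (bw z z r f))"
    have "(z,{b,?nx}) \<notin> (\<Union>p\<in>set r. Es z p)"
    proof
      assume "(z,{b,?nx}) \<in> (\<Union>p\<in>set r. Es z p)"
      then obtain q where q: "q \<in> set r" "(z,{b,?nx}) \<in> Es z q" by blast
      show False using Es_center[OF q(2)] Cons.prems(1) q(1) by auto
    qed
    with x S have "(z,{b,?nx}) \<in> (\<lambda>p. (z, {fst p, snd p})) ` set (bl r f)" by auto
    then show False using notin2 by auto
  qed
  have E3: "set (map nrm (if a = b then [(z,a,z)] else [(z,a,b),(a,b,z)])) = Es z (a,b)"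
    by (auto simp: nrm_def Es_def)
  show ?case
  proof (cases "a = b")
    case True
    have "(a,{z}) \<in> Es z (a,b)" using True by (simp add: Es_def)
    then show ?thesis using True IH E1[of "(a,{z})"] E2 ab by (simp add: p)
  next
    case False
    have "(a,{z,b}) \<in> Es z (a,b)" "(b,{a,z}) \<in> Es z (a,b)" using False by (auto simp: Es_def)
    then show ?thesis using False IH E1[of "(a,{z,b})"] E1[of "(b,{a,z})"] E2 ab by (simp add: p)
  qed
qed simp





definition newpart :: "nat \<Rightarrow> (nat\<times>nat) list" where
  "newpart w = [(1,w),(w,w)] @ map (\<lambda>b. (b,w)) [2..<w]"

primrec body :: "nat \<Rightarrow> (nat\<times>nat) list" where
  "body 0 = [(1,2),(2,2)]"
| "body (Suc i) = body i @ newpart (i+3)"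

definition rs :: "nat \<Rightarrow> (nat\<times>nat) list" where "rs i = body i @ [(1,1)]"

definition sp :: "nat\<times>nat \<Rightarrow> nat\<times>nat" where "sp p = (min (fst p) (snd p), max (fst p) (snd p))"

lemma body_hd: "\<exists>r. body i = (1,2) # r"
  by (induction i) auto

lemma body_range: "p \<in> set (body i) \<Longrightarrow> fst p \<in> {1..i+2} \<and> snd p \<in> {1..i+2}"
  by (induction i) (auto simp: newpart_def)

lemma newpart_sp: "w \<ge> 3 \<Longrightarrow> distinct (map sp (newpart w))"
proof -
  assume w: "w \<ge> 3"
  have m: "map sp (newpart w) = (1,w) # (w,w) # map (\<lambda>b. (b,w)) [2..<w]"
    using w by (simp add: newpart_def sp_def)
  have "distinct (map (\<lambda>b. (b,w)) [2..<w])"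
    by (simp add: distinct_map inj_on_def)
  then show ?thesis unfolding m using w by auto
qed

lemma body_sp: "distinct (map sp (body i)) \<and> (1,1) \<notin> sp ` set (body i)"
proof (induction i)
  case 0 then show ?case by (auto simp: sp_def)
next
  case (Suc i)
  have d: "distinct (map sp (newpart (i+3)))" by (rule newpart_sp) simp
  have new: "snd (sp p) = i+3" if "p \<in> set (newpart (i+3))" for p
    using that by (auto simp: newpart_def sp_def)
  have old: "snd (sp p) \<le> i+2" if "p \<in> set (body i)" for p
    using body_range[OF that] by (auto simp: sp_def)
  have disj: "sp ` set (body i) \<inter> sp ` set (newpart (i+3)) = {}"
    using new old by fastforce
  have "(1,1) \<notin> sp ` set (newpart (i+3))"
  proof
    assume "(1,1) \<in> sp ` set (newpart (i+3))"
    then obtain p where p: "p \<in> set (newpart (i+3))" "(1,1) = sp p" by blast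
    then have "snd (sp p) = 1" by (metis snd_conv)
    with new[OF p(1)] show False by simp
  qed
  then show ?case using Suc d disj by auto
qed

lemma rs_sp: "distinct (map sp (rs i))"
  using body_sp[of i] by (auto simp: rs_def sp_def)

lemma bl_map: "bs \<noteq> [] \<Longrightarrow> bl (map (\<lambda>b. (b,w)) bs) f = map (\<lambda>c. (w,c)) (tl bs @ [f])"
proof (induction bs)
  case (Cons x bs)
  then show ?case by (cases bs) auto
qed simp

lemma bl_map2: "(w, case map (\<lambda>b. (b,w)) bs of [] \<Rightarrow> f | p#_ \<Rightarrow> fst p) # bl (map (\<lambda>b. (b,w)) bs) f
   = map (\<lambda>c. (w,c)) (bs @ [f])"
proof (cases bs)
  case (Cons a list)
  have "bl (map (\<lambda>b. (b,w)) bs) f = map (\<lambda>c. (w,c)) (tl bs @ [f])" by (rule bl_map) (simp add: Cons)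
  then show ?thesis by (simp add: Cons)
qed simp

lemma bl_newpart: "w \<ge> 3 \<Longrightarrow> bl (newpart w) f = (w,w) # map (\<lambda>c. (w,c)) ([2..<w] @ [f])"
proof -
  assume w: "w \<ge> 3"
  have e: "[2..<w] = 2 # [3..<w]" using w upt_rec by simp
  show ?thesis unfolding newpart_def by (simp add: bl_Cons e bl_map2 del: upt_Suc)
qed

lemma bl_body_Suc: "bl (body (Suc i)) 1 = bl (body i) 1 @ (i+3,i+3) # map (\<lambda>c. (i+3,c)) ([2..<i+3] @ [1])"
proof -
  have "bl (body (Suc i)) 1 = bl (body i) (fst (hd (newpart (i+3)))) @ bl (newpart (i+3)) 1"
    by (simp add: bl_append newpart_def)
  also have "\<dots> = bl (body i) 1 @ bl (newpart (i+3)) 1" by (simp add: newpart_def)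
  finally show ?thesis by (simp add: bl_newpart)
qed

lemma bl_body: "distinct (map sp (bl (body i) 1)) \<and> (1,1) \<notin> sp ` set (bl (body i) 1)
   \<and> (\<forall>p\<in>set (bl (body i) 1). fst p \<in> {1..i+2} \<and> snd p \<in> {1..i+2})"
proof (induction i)
  case 0 then show ?case by (auto simp: sp_def)
next
  case (Suc i)
  let ?w = "i+3"
  let ?L = "[2..<?w] @ [1]"
  let ?N = "(?w,?w) # map (\<lambda>c. (?w,c)) ?L"
  have m: "map sp ?N = (?w,?w) # map (\<lambda>c. (c,?w)) ?L"
    by (simp add: sp_def)
  have i1: "inj_on (\<lambda>c. (c,?w)) (set ?L)" by (simp add: inj_on_def)
  have dL: "distinct ?L" by simp
  have d1: "distinct (map (\<lambda>c. (c,?w)) ?L)" using i1 dL by (simp only: distinct_map)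
  have nin: "(?w,?w) \<notin> set (map (\<lambda>c. (c,?w)) ?L)" by auto
  have d: "distinct (map sp ?N)" unfolding m distinct.simps(2) by (rule conjI[OF nin d1])
  have new: "snd (sp p) = ?w" if "p \<in> set ?N" for p
    using that by (auto simp: sp_def)
  have old: "snd (sp p) \<le> i+2" if "p \<in> set (bl (body i) 1)" for p
  proof -
    have "fst p \<le> i+2" "snd p \<le> i+2" using Suc.IH that by auto
    then show ?thesis by (simp add: sp_def)
  qed
  have disj: "set (map sp (bl (body i) 1)) \<inter> set (map sp ?N) = {}"
  proof (rule equals0I)
    fix x assume "x \<in> set (map sp (bl (body i) 1)) \<inter> set (map sp ?N)"
    then have x1': "x \<in> set (map sp (bl (body i) 1))" and x2': "x \<in> set (map sp ?N)" by (rule IntD1, rule IntD2)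
    have x1: "x \<in> sp ` set (bl (body i) 1)" using x1' by (simp only: set_map)
    have x2: "x \<in> sp ` set ?N" using x2' by (simp only: set_map)
    obtain p where p: "p \<in> set (bl (body i) 1)" "x = sp p" using x1 by blast
    obtain q where q: "q \<in> set ?N" "x = sp q" using x2 by (rule imageE) simp
    have pq: "p \<in> set (bl (body i) 1)" "q \<in> set ?N" "x = sp p" "x = sp q" using p q by auto
    have "snd (sp p) \<le> i+2" by (rule old[OF pq(1)])
    moreover have "snd (sp q) = i+3" by (rule new[OF pq(2)])
    ultimately show False using pq(3,4) by simp
  qed
  have n1: "(1,1) \<notin> sp ` set ?N"
  proof
    assume "(1,1) \<in> sp ` set ?N"
    then obtain p where p: "p \<in> set ?N" "(1,1) = sp p" by blast
    then have "snd (sp p) = 1" by (metis snd_conv)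
    with new[OF p(1)] show False by simp
  qed
  have IH1: "distinct (map sp (bl (body i) 1))" and IH2: "(1,1) \<notin> sp ` set (bl (body i) 1)"
    and IH3: "\<forall>p\<in>set (bl (body i) 1). fst p \<in> {1..i+2} \<and> snd p \<in> {1..i+2}"
    using Suc.IH by auto
  have c1': "distinct (map sp (bl (body i) 1) @ map sp ?N)"
    by (subst distinct_append) (rule conjI[OF IH1 conjI[OF d disj]])
  have c1: "distinct (map sp (bl (body (Suc i)) 1))"
    unfolding bl_body_Suc map_append[of sp "bl (body i) 1"] by (rule c1')
  have c2: "(1,1) \<notin> sp ` set (bl (body (Suc i)) 1)"
    unfolding bl_body_Suc set_append image_Un using IH2 n1 by blast
  have c3: "\<forall>p\<in>set ?N. fst p \<in> {1..Suc i+2} \<and> snd p \<in> {1..Suc i+2}" by auto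
  have c4: "\<forall>p\<in>set (bl (body (Suc i)) 1). fst p \<in> {1..Suc i+2} \<and> snd p \<in> {1..Suc i+2}"
    unfolding bl_body_Suc set_append using IH3 c3 by fastforce
  show ?case using c1 c2 c4 by blast
qed

lemma bl_rs: "bl (rs i) 1 = bl (body i) 1 @ [(1,1)]"
  using body_hd[of i] by (auto simp: rs_def bl_append)

lemma bl_rs_sp: "distinct (map sp (bl (rs i) 1))"
proof -
  have "sp (1,1) = (1,1)" by (simp add: sp_def)
  then show ?thesis unfolding bl_rs using bl_body[of i] by auto
qed

lemma rs_range: "p \<in> set (rs i) \<Longrightarrow> fst p \<in> {1..i+2} \<and> snd p \<in> {1..i+2}"
  using body_range[of p i] by (auto simp: rs_def)

lemma len_Tl_map: "w \<notin> set bs \<Longrightarrow> length (Tl z (map (\<lambda>b. (b,w)) bs)) = 3 * length bs"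
  by (induction bs) auto

lemma len_Tl_append: "length (Tl z (xs @ ys)) = length (Tl z xs) + length (Tl z ys)"
  by (simp add: Tl_append)

lemma len_T: "2 * length (Tl z (rs i)) = 3 * (i+2)^2 + (i+2)"
proof (induction i)
  case 0 then show ?case by (simp add: rs_def power2_eq_square)
next
  case (Suc i)
  have "length (Tl z (newpart (i+3))) = 5 + 3 * (i+1)"
    by (simp add: newpart_def len_Tl_map)
  then have "length (Tl z (rs (Suc i))) = length (Tl z (rs i)) + 5 + 3 * (i+1)"
    by (simp add: rs_def len_Tl_append)
  with Suc show ?case by (simp add: power2_eq_square algebra_simps)
qed

lemma Tl_set: "\<forall>p\<in>set xs. fst p \<in> A \<and> snd p \<in> A \<Longrightarrow> set (Tl z xs) \<subseteq> insert z A"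
proof (induction xs)
  case (Cons p xs)
  then show ?case by (cases p) (auto split: if_splits)
qed simp

lemma Tl_succ: "\<forall>p\<in>set xs. fst p \<noteq> z \<and> snd p \<noteq> z \<Longrightarrow>
   successively (\<noteq>) (Tl z xs) \<and> (xs \<noteq> [] \<longrightarrow> last (Tl z xs) = z)"
proof (induction xs)
  case (Cons p r)
  obtain a b where p: "p = (a,b)" by force
  have ab: "a \<noteq> z" "b \<noteq> z" using Cons.prems p by auto
  have IH: "successively (\<noteq>) (Tl z r) \<and> (r \<noteq> [] \<longrightarrow> last (Tl z r) = z)" using Cons.IH Cons.prems by auto
  have hd: "Tl z r = [] \<or> hd (Tl z r) \<noteq> z"
  proof (cases r)
    case (Cons q r')
    then have "hd (Tl z r) = fst q" using hd_Tl by simp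
    moreover have "fst q \<noteq> z" using Cons \<open>\<forall>p\<in>set (p # r). fst p \<noteq> z \<and> snd p \<noteq> z\<close> by auto
    ultimately show ?thesis by simp
  qed simp
  have s1: "successively (\<noteq>) (z # Tl z r)" using IH hd by (auto simp: successively_Cons)
  have l: "last (Tl z (p # r)) = z" using IH by (cases "Tl z r = []") (auto simp: p)
  show ?case using s1 l ab by (auto simp: p successively_append_iff successively_Cons)
qed simp


lemma distinct_conv: "(\<And>x y. f x = f y \<longleftrightarrow> g x = g y) \<Longrightarrow> distinct (map f xs) = distinct (map g xs)"
  by (induction xs) auto

lemma doubleton_minmax: "({a,b} = {c,d}) \<longleftrightarrow> (min a b, max a b) = (min c d, max (c::nat) d)"
  by (auto simp: doubleton_eq_iff min_def max_def)

lemma sp_set_conv: "distinct (map sp xs) = distinct (map (\<lambda>p. {fst p, snd p}) xs)"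
  by (rule distinct_conv) (simp add: sp_def doubleton_minmax)

lemma bw_hasz: "\<forall>p\<in>set xs. fst p \<noteq> z \<and> snd p \<noteq> z \<Longrightarrow> y \<in> set (map nrm (bw z z xs f)) \<Longrightarrow> fst y = z \<or> z \<in> snd y"
  unfolding bw_set by (auto simp: Es_def split: if_splits)

lemma mixdist: "distinct (b # X) \<Longrightarrow> distinct (a # W) \<Longrightarrow> (\<forall>x\<in>set (b#X). P x) \<Longrightarrow> (\<forall>x\<in>set (a#W). \<not> P x)
  \<Longrightarrow> distinct (a # X @ b # W)"
  by auto

lemma refl_set: "2 \<le> length xs \<Longrightarrow> set (refl xs) = set xs"
  by (auto simp: refl_def)

lemma rs_prop:
  "\<forall>p\<in>set (rs i). fst p \<noteq> i+3 \<and> snd p \<noteq> i+3"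
  "distinct (map nrm (bw (i+3) (i+3) (rs i) 1))"
proof -
  show r: "\<forall>p\<in>set (rs i). fst p \<noteq> i+3 \<and> snd p \<noteq> i+3" using rs_range by fastforce
  show "distinct (map nrm (bw (i+3) (i+3) (rs i) 1))"
    using bw_distinct[OF r] rs_sp bl_rs_sp by (simp add: sp_set_conv)
qed

lemma rs_Cons: "\<exists>rest. rs i = (1,2) # rest"
  using body_hd[of i] by (auto simp: rs_def)

lemma step_cat:
  assumes R: "valid R" "set R \<subseteq> {1..i+2}" "R!0 = 1" "R!1 = 2"
  shows "valid (Tl (i+3) (rs i) @ R)"
proof -
  define z where "z = i + 3"
  obtain rest where rsd: "rs i = (1,2) # rest" using rs_Cons by blast
  have rng: "\<forall>p\<in>set (rs i). fst p \<noteq> z \<and> snd p \<noteq> z" using rs_prop(1) z_def by simp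
  have dX: "distinct (map nrm (bw z z (rs i) 1))" using rs_prop(2) z_def by simp
  define T where "T = Tl z (rs i)"
  have Td: "T = 1 # 2 # z # Tl z rest" by (simp add: T_def rsd)
  have lR: "2 \<le> length R" using R(1) by (simp add: valid_def)
  obtain R'' where Rd: "R = 1 # 2 # R''"
    using lR R(3,4) by (cases R; cases "tl R") auto
  define e where "e = R ! (length R - 2)"
  have reflR: "refl R = 2 # R @ [e]" using R(4) by (simp add: refl_def e_def)
  have reflTR: "refl (T @ R) = 2 # T @ R @ [e]"
  proof -
    have "length (T @ R) - 2 = length T + (length R - 2)" using lR by simp
    then have "(T @ R) ! (length (T @ R) - 2) = e"
      by (simp only: nth_append_length_plus e_def)
    moreover have "(T @ R) ! 1 = 2" by (simp add: Td)
    ultimately show ?thesis by (simp add: refl_def)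
  qed
  define nx where "nx = (case rest of [] \<Rightarrow> 1 | p#_ \<Rightarrow> fst p)"
  define X where "X = (1,2,z) # (2,z,nx) # bw z z rest 1"
  have bw2: "bw z 2 (rs i) 1 = (2,1,2) # X" by (cases rest) (simp_all add: rsd X_def nx_def)
  have bwz: "bw z z (rs i) 1 = (z,1,2) # X" by (cases rest) (simp_all add: rsd X_def nx_def)
  define W' where "W' = win (1 # 2 # R'' @ [e])"
  have w1: "win (refl (T @ R)) = (2,1,2) # X @ (z,1,2) # W'"
  proof -
    have a1: "win (refl (T @ R)) = win (2 # T @ (R @ [e]))" by (simp add: reflTR)
    have a2: "win (2 # T @ (R @ [e])) = bw z 2 (rs i) 1 @ win (z # R @ [e])"
      unfolding T_def by (subst win_Tl) (auto simp: Rd rsd)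
    have a3: "win (z # R @ [e]) = (z,1,2) # W'" by (simp add: Rd W'_def)
    show ?thesis unfolding a1 a2 a3 bw2 by simp
  qed
  have w2: "win (refl R) = (2,1,2) # W'" unfolding reflR by (simp add: Rd W'_def)
  have dR: "distinct (map nrm ((2,1,2) # W'))" using R(1) w2 by (simp add: valid_def)
  have dZ: "distinct (map nrm ((z,1,2) # X))" using dX bwz by simp
  have hz: "\<forall>y\<in>set (map nrm ((z,1,2) # X)). fst y = z \<or> z \<in> snd y"
    using bw_hasz[OF rng] bwz by metis
  have nz: "\<forall>y\<in>set (map nrm ((2,1,2) # W')). \<not> (fst y = z \<or> z \<in> snd y)"
  proof
    fix y assume "y \<in> set (map nrm ((2,1,2) # W'))"
    then obtain t where t: "t \<in> set (win (refl R))" "y = nrm t" using w2 by auto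
    have "set (refl R) \<subseteq> {1..i+2}" using refl_set[OF lR] R(2) by simp
    then have "fst t \<in> {1..i+2}" "fst (snd t) \<in> {1..i+2}" "snd (snd t) \<in> {1..i+2}"
      using win_set[OF t(1)] by auto
    then show "\<not> (fst y = z \<or> z \<in> snd y)" using t(2) z_def
      by (cases t) auto
  qed
  have dist: "distinct (map nrm (win (refl (T @ R))))"
  proof -
    have dZ': "distinct (nrm (z,1,2) # map nrm X)" using dZ by (simp only: list.map)
    have dR': "distinct (nrm (2,1,2) # map nrm W')" using dR by (simp only: list.map)
    have hz': "\<forall>y\<in>set (nrm (z,1,2) # map nrm X). fst y = z \<or> z \<in> snd y" using hz by (simp only: list.map)
    have nz': "\<forall>y\<in>set (nrm (2,1,2) # map nrm W'). \<not> (fst y = z \<or> z \<in> snd y)" using nz by (simp only: list.map)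
    have "distinct (nrm (2,1,2) # map nrm X @ nrm (z,1,2) # map nrm W')"
      by (rule mixdist[OF dZ' dR' hz' nz'])
    then show ?thesis unfolding w1 by (simp only: list.map map_append)
  qed
  have sT: "successively (\<noteq>) T \<and> last T = z" using Tl_succ[OF rng] by (simp add: T_def rsd)
  have sR: "successively (\<noteq>) R" using R(1) by (simp add: valid_def)
  have succ: "successively (\<noteq>) (T @ R)"
  proof -
    have h: "hd R = 1" "R \<noteq> []" "T \<noteq> []" by (simp_all add: Rd Td)
    show ?thesis using sT sR z_def h by (simp add: successively_append_iff)
  qed
  show ?thesis using dist succ lR unfolding valid_def T_def z_def by simp
qed

lemma step_one: "valid (2 # Tl (i+3) (rs i))"
proof -
  define z where "z = i + 3"
  obtain rest where rsd: "rs i = (1,2) # rest" using rs_Cons by blast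
  have rng: "\<forall>p\<in>set (rs i). fst p \<noteq> z \<and> snd p \<noteq> z" using rs_prop(1) z_def by simp
  have dX: "distinct (map nrm (bw z z (rs i) 1))" using rs_prop(2) z_def by simp
  define T where "T = Tl z (rs i)"
  have Td: "T = 1 # 2 # z # Tl z rest" by (simp add: T_def rsd)
  have Te: "T = Tl z (body i) @ [1, z]" by (simp add: T_def rs_def Tl_append)
  have reflT: "refl (2 # T) = 1 # 2 # T @ [1]"
  proof -
    have a: "T ! length (Tl z (body i)) = 1" using Te by (simp add: nth_append)
    have "length (2 # T) - 2 = Suc (length (Tl z (body i)))" by (simp add: Te)
    then have "(2 # T) ! (length (2 # T) - 2) = 1" using a by simp
    moreover have "(2 # T) ! 1 = 1" by (simp add: Td)
    ultimately show ?thesis unfolding refl_def by simp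
  qed
  define nx where "nx = (case rest of [] \<Rightarrow> 1 | p#_ \<Rightarrow> fst p)"
  define X where "X = (1,2,z) # (2,z,nx) # bw z z rest 1"
  have bw2: "bw z 2 (rs i) 1 = (2,1,2) # X" by (cases rest) (simp_all add: rsd X_def nx_def)
  have bwz: "bw z z (rs i) 1 = (z,1,2) # X" by (cases rest) (simp_all add: rsd X_def nx_def)
  have w1: "win (refl (2 # T)) = (1,2,1) # (2,1,2) # X"
  proof -
    have a1: "win (refl (2 # T)) = (1,2,1) # win (2 # T @ [1])" unfolding reflT by (simp add: win_Cons2 Td)
    have a2: "win (2 # T @ [1]) = bw z 2 (rs i) 1 @ win (z # [1])"
      unfolding T_def by (subst win_Tl) (auto simp: rsd)
    show ?thesis unfolding a1 a2 bw2 by simp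
  qed
  have dZ: "distinct (map nrm X)" using dX bwz by simp
  have hz: "\<forall>y\<in>set (map nrm X). fst y = z \<or> z \<in> snd y"
    using bw_hasz[OF rng] bwz by (metis list.set_intros(2) list.simps(9))
  have z3: "z \<ge> 3" using z_def by simp
  have dist: "distinct (map nrm (win (refl (2 # T))))"
    unfolding w1 using dZ hz z3 by force
  have sT: "successively (\<noteq>) T" using Tl_succ[OF rng] by (simp add: T_def)
  have succ: "successively (\<noteq>) (2 # T)" using sT by (simp add: successively_Cons Td)
  show ?thesis using dist succ unfolding valid_def T_def z_def by (simp add: Td[unfolded T_def z_def])
qed


lemma valid_map:
  assumes v: "valid R" and inj: "inj_on \<pi> (set R)"
  shows "valid (map \<pi> R)"
proof -
  have lR: "2 \<le> length R" using v by (simp add: valid_def)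
  have s: "successively (\<noteq>) (map \<pi> R)"
    unfolding successively_map
    by (rule successively_mono[of "(\<noteq>)"]) (use v inj in \<open>auto simp: valid_def inj_on_def\<close>)
  have r: "refl (map \<pi> R) = map \<pi> (refl R)" using lR by (simp add: refl_def)
  let ?g = "\<lambda>(a,b,c). (\<pi> a, \<pi> b, \<pi> c)"
  let ?W = "win (refl R)"
  have d: "distinct (map nrm ?W)" using v by (simp add: valid_def)
  have Ws: "t \<in> set ?W \<Longrightarrow> fst t \<in> set R \<and> fst (snd t) \<in> set R \<and> snd (snd t) \<in> set R" for t
    using win_set[of t "refl R"] refl_set[OF lR] by auto
  have "inj_on (nrm \<circ> ?g) (set ?W)"
  proof (rule inj_onI)
    fix t t' assume t: "t \<in> set ?W" "t' \<in> set ?W" "(nrm \<circ> ?g) t = (nrm \<circ> ?g) t'"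
    obtain a b c where tt: "t = (a,b,c)" by (cases t) auto
    obtain a' b' c' where tt': "t' = (a',b',c')" by (cases t') auto
    have mem: "{a,b,c,a',b',c'} \<subseteq> set R" using Ws[OF t(1)] Ws[OF t(2)] tt tt' by auto
    from t(3) have e1: "\<pi> b = \<pi> b'" and e2: "\<pi> ` {a,c} = \<pi> ` {a',c'}" by (auto simp: tt tt')
    have "b = b'" using e1 inj mem by (auto simp: inj_on_def)
    moreover have "{a,c} = {a',c'}"
    proof -
      have s1: "{a,c} \<subseteq> set R" "{a',c'} \<subseteq> set R" using mem by auto
      have iff: "\<pi> ` {a,c} = \<pi> ` {a',c'} \<longleftrightarrow> {a,c} = {a',c'}" by (rule inj_on_image_eq_iff[OF inj s1])
      show ?thesis using e2 iff by blast
    qed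
    ultimately have "nrm t = nrm t'" by (simp add: tt tt')
    then show "t = t'" using d t(1,2) by (auto simp: distinct_map inj_on_def)
  qed
  then have "distinct (map (nrm \<circ> ?g) ?W)" using d by (simp add: distinct_map)
  then have "distinct (map nrm (win (refl (map \<pi> R))))" by (simp add: r win_map)
  then show ?thesis using s lR by (simp add: valid_def)
qed

definition swp :: "nat \<Rightarrow> nat \<Rightarrow> nat \<Rightarrow> nat" where
  "swp a b x = (if x = a then b else if x = b then a else x)"

lemma swp_inj: "inj (swp a b)"
  by (auto simp: inj_def swp_def split: if_splits)

lemma relabel:
  assumes v: "valid R" and S: "set R \<subseteq> {1..j}"
  shows "\<exists>R'. valid R' \<and> length R' = length R \<and> set R' \<subseteq> {1..j} \<and> R'!0 = 1 \<and> R'!1 = 2"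
proof -
  have lR: "2 \<le> length R" using v by (simp add: valid_def)
  define p where "p = R!0"
  define q where "q = R!1"
  have pq: "p \<noteq> q" using v lR successively_nth[of "(\<noteq>)" R 0] by (simp add: valid_def p_def q_def)
  have l0: "0 < length R" "1 < length R" using lR by auto
  have "R!0 \<in> set R" "R!1 \<in> set R" using nth_mem[OF l0(1)] nth_mem[OF l0(2)] by auto
  then have pin: "p \<in> {1..j}" "q \<in> {1..j}" using S by (auto simp: p_def q_def)
  then have j2: "2 \<le> j" using pq by auto
  define q' where "q' = swp p 1 q"
  define \<pi> where "\<pi> = swp q' 2 \<circ> swp p 1"
  have q'1: "q' \<noteq> 1" using pq by (auto simp: q'_def swp_def)
  have q'in: "q' \<in> {1..j}" using pin j2 by (auto simp: q'_def swp_def)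
  have inj: "inj \<pi>" unfolding \<pi>_def using swp_inj by (simp add: inj_compose)
  have rng: "\<pi> x \<in> {1..j}" if "x \<in> {1..j}" for x
    using that pin q'in j2 by (auto simp: \<pi>_def swp_def)
  have "\<pi> p = 1" using q'1 by (simp add: \<pi>_def swp_def)
  moreover have "\<pi> q = 2" by (simp add: \<pi>_def q'_def swp_def)
  moreover have "valid (map \<pi> R)" using valid_map[OF v] inj by (simp add: inj_on_def inj_def)
  moreover have "set (map \<pi> R) \<subseteq> {1..j}" using S rng by auto
  moreover have "map \<pi> R ! 0 = \<pi> (R!0)" "map \<pi> R ! 1 = \<pi> (R!1)" using l0 by simp_all
  ultimately show ?thesis using lR by (intro exI[of _ "map \<pi> R"]) (simp add: p_def q_def)
qed

definition Qk :: "nat \<Rightarrow> bool" where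
  "Qk k \<longleftrightarrow> (\<forall>m. 2 \<le> m \<longrightarrow> 2*m \<le> k^2*(k-1) \<longrightarrow> (\<exists>xs. valid xs \<and> length xs = m \<and> set xs \<subseteq> {1..k}))"

lemma T_set: "set (Tl (i+3) (rs i)) \<subseteq> {1..i+3}"
proof -
  have "set (Tl (i+3) (rs i)) \<subseteq> insert (i+3) {1..i+2}"
    by (rule Tl_set) (use rs_range in auto)
  then show ?thesis by auto
qed

lemma ident: "(j::nat) \<ge> 1 \<Longrightarrow> j^2*(j-1) + (3*j^2 + j) = (j+1)^2 * j"
proof -
  assume "j \<ge> 1"
  then obtain k where "j = Suc k" by (cases j) auto
  then show ?thesis by (simp add: power2_eq_square algebra_simps)
qed

lemma Q_step:
  assumes Q: "Qk (i+2)"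
    and gap: "\<forall>m. (i+2)^2*(i+1) < 2*m \<longrightarrow> 2*m \<le> 3*(i+2)^2 + (i+2) \<longrightarrow> (\<exists>xs. valid xs \<and> length xs = m \<and> set xs \<subseteq> {1..i+3})"
  shows "Qk (i+3)"
  unfolding Qk_def
proof (intro allI impI)
  fix m :: nat
  assume m2: "2 \<le> m" and mb: "2*m \<le> (i+3)^2*(i+3-1)"
  define T where "T = Tl (i+3) (rs i)"
  define t where "t = length T"
  have t2: "2*t = 3*(i+2)^2 + (i+2)" using len_T by (simp add: t_def T_def)
  have id: "(i+2)^2*(i+1) + (3*(i+2)^2 + (i+2)) = (i+3)^2*(i+2)"
    by (simp add: power2_eq_square algebra_simps)
  have mb': "2*m \<le> (i+3)^2*(i+2)" using mb by simp
  show "\<exists>xs. valid xs \<and> length xs = m \<and> set xs \<subseteq> {1..i+3}"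
  proof (cases "2*m \<le> (i+2)^2*(i+1)")
    case True
    then obtain xs where "valid xs" "length xs = m" "set xs \<subseteq> {1..i+2}"
      using Q m2 by (auto simp: Qk_def)
    then show ?thesis by (intro exI[of _ xs]) auto
  next
    case F1: False
    show ?thesis
    proof (cases "m \<le> t")
      case True
      then show ?thesis using gap F1 t2 by auto
    next
      case F2: False
      show ?thesis
      proof (cases "m = t + 1")
        case True
        have "valid (2 # T)" using step_one by (simp add: T_def)
        moreover have "set (2 # T) \<subseteq> {1..i+3}" using T_set by (auto simp: T_def)
        ultimately show ?thesis using True t_def by (intro exI[of _ "2 # T"]) auto
      next
        case False
        define s where "s = m - t"
        have s2: "2 \<le> s" using F2 False by (simp add: s_def)
        have sb: "2*s \<le> (i+2)^2*(i+2-1)" using mb' t2 id F2 by (simp add: s_def)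
        obtain R where R: "valid R" "length R = s" "set R \<subseteq> {1..i+2}"
          using Q s2 sb unfolding Qk_def by blast
        obtain R' where R': "valid R'" "length R' = s" "set R' \<subseteq> {1..i+2}" "R'!0 = 1" "R'!1 = 2"
          using relabel[OF R(1,3)] R(2) by auto
        have "valid (T @ R')" using step_cat[OF R'(1,3,4,5)] by (simp add: T_def)
        moreover have "length (T @ R') = m" using R'(2) F2 by (simp add: s_def t_def)
        moreover have "set (T @ R') \<subseteq> {1..i+3}" using T_set R'(3) by (auto simp: T_def)
        ultimately show ?thesis by blast
      qed
    qed
  qed
qed

lemma Q_big: "i \<ge> 3 \<Longrightarrow> Qk (i+2) \<Longrightarrow> Qk (i+3)"
proof -
  assume i: "i \<ge> 3" and Q: "Qk (i+2)"
  have "(i+2)^2*4 \<le> (i+2)^2*(i+1)" using i by (intro mult_le_mono) auto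
  moreover have "i+2 \<le> (i+2)^2" by (simp add: power2_eq_square)
  ultimately have "3*(i+2)^2 + (i+2) \<le> (i+2)^2*(i+1)" by linarith
  then show ?thesis by (intro Q_step[OF Q]) auto
qed


lemma wit: "valid xs \<Longrightarrow> length xs = m \<Longrightarrow> set xs \<subseteq> {1..k} \<Longrightarrow> \<exists>ys. valid ys \<and> length ys = m \<and> set ys \<subseteq> {1..k}"
  by blast

lemma Q2: "Qk 2"
proof -
  have v: "valid [1,2]" by code_simp
  show ?thesis unfolding Qk_def
  proof (intro allI impI)
    fix m :: nat assume "2 \<le> m" "2*m \<le> 2^2*(2-1)"
    then have "m = 2" by simp
    then show "\<exists>xs. valid xs \<and> length xs = m \<and> set xs \<subseteq> {1..2}" using wit[OF v] by simp
  qed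
qed
lemma w_3_3: "valid [1, 2, 3]" by code_simp
lemma w_3_4: "valid [1, 2, 1, 3]" by code_simp
lemma w_3_5: "valid [1, 3, 2, 1, 3]" by code_simp
lemma w_3_6: "valid [1, 3, 2, 3, 2, 1]" by code_simp
lemma w_3_7: "valid [1, 2, 3, 1, 3, 1, 2]" by code_simp

lemma gap3: "\<forall>m. (0+2)^2*(0+1) < 2*m \<longrightarrow> 2*m \<le> 3*(0+2)^2 + (0+2) \<longrightarrow> (\<exists>xs. valid xs \<and> length xs = m \<and> set xs \<subseteq> {1..0+3})"
proof (intro allI impI)
  fix m :: nat assume a: "(0+2)^2*(0+1) < 2*m" "2*m \<le> 3*(0+2)^2 + (0+2)"
  then have "m = 3 \<or> m = 4 \<or> m = 5 \<or> m = 6 \<or> m = 7" by (simp add: power2_eq_square) presburger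
  then show "\<exists>xs. valid xs \<and> length xs = m \<and> set xs \<subseteq> {1..0+3}"
    by (elim disjE) (rule wit[OF w_3_3], simp, simp, rule wit[OF w_3_4], simp, simp, rule wit[OF w_3_5], simp, simp, rule wit[OF w_3_6], simp, simp, rule wit[OF w_3_7], simp, simp)
qed
lemma w_4_10: "valid [1, 2, 1, 3, 1, 4, 3, 2, 4, 3]" by code_simp
lemma w_4_11: "valid [1, 2, 4, 3, 4, 1, 4, 1, 2, 3, 2]" by code_simp
lemma w_4_12: "valid [1, 4, 1, 2, 3, 4, 3, 1, 2, 1, 2, 4]" by code_simp
lemma w_4_13: "valid [1, 2, 1, 3, 2, 1, 4, 1, 4, 3, 2, 4, 3]" by code_simp
lemma w_4_14: "valid [1, 3, 2, 4, 1, 4, 3, 2, 1, 4, 1, 3, 4, 2]" by code_simp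
lemma w_4_15: "valid [1, 4, 1, 3, 2, 3, 4, 2, 4, 2, 1, 4, 3, 1, 2]" by code_simp

lemma gap4: "\<forall>m. (1+2)^2*(1+1) < 2*m \<longrightarrow> 2*m \<le> 3*(1+2)^2 + (1+2) \<longrightarrow> (\<exists>xs. valid xs \<and> length xs = m \<and> set xs \<subseteq> {1..1+3})"
proof (intro allI impI)
  fix m :: nat assume a: "(1+2)^2*(1+1) < 2*m" "2*m \<le> 3*(1+2)^2 + (1+2)"
  then have "m = 10 \<or> m = 11 \<or> m = 12 \<or> m = 13 \<or> m = 14 \<or> m = 15" by (simp add: power2_eq_square) presburger
  then show "\<exists>xs. valid xs \<and> length xs = m \<and> set xs \<subseteq> {1..1+3}"
    by (elim disjE) (rule wit[OF w_4_10], simp, simp, rule wit[OF w_4_11], simp, simp, rule wit[OF w_4_12], simp, simp, rule wit[OF w_4_13], simp, simp, rule wit[OF w_4_14], simp, simp, rule wit[OF w_4_15], simp, simp)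
qed
lemma w_5_25: "valid [1, 4, 3, 5, 4, 5, 2, 1, 3, 5, 1, 2, 1, 4, 5, 1, 4, 1, 3, 2, 1, 2, 4, 3, 1]" by code_simp
lemma w_5_26: "valid [1, 3, 4, 2, 1, 5, 4, 3, 4, 3, 5, 1, 5, 1, 3, 2, 3, 5, 2, 1, 3, 1, 4, 3, 2, 5]" by code_simp

lemma gap5: "\<forall>m. (2+2)^2*(2+1) < 2*m \<longrightarrow> 2*m \<le> 3*(2+2)^2 + (2+2) \<longrightarrow> (\<exists>xs. valid xs \<and> length xs = m \<and> set xs \<subseteq> {1..2+3})"
proof (intro allI impI)
  fix m :: nat assume a: "(2+2)^2*(2+1) < 2*m" "2*m \<le> 3*(2+2)^2 + (2+2)"
  then have "m = 25 \<or> m = 26" by (simp add: power2_eq_square) presburger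
  then show "\<exists>xs. valid xs \<and> length xs = m \<and> set xs \<subseteq> {1..2+3}"
    by (elim disjE) (rule wit[OF w_5_25], simp, simp, rule wit[OF w_5_26], simp, simp)
qed

lemma Q_all: "Qk (i+2)"
proof (induction i)
  case 0 show ?case by (simp only: add_0) (rule Q2)
next
  case (Suc i)
  show ?case
  proof (cases "i \<ge> 3")
    case True from Q_big[OF True Suc.IH] show ?thesis by (simp add: numeral_3_eq_3)
  next
    case False
    then have "i = 0 \<or> i = 1 \<or> i = 2" by auto
    then show ?thesis
    proof (elim disjE)
      assume "i = 0" then show ?thesis using Q_step[of 0] Suc gap3 by (simp add: eval_nat_numeral)
    next
      assume "i = 1" then show ?thesis using Q_step[of 1] Suc gap4 by (simp add: eval_nat_numeral)
    next
      assume "i = 2" then show ?thesis using Q_step[of 2] Suc gap5 by (simp add: eval_nat_numeral)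
    qed
  qed
qed



definition PN :: "nat \<Rightarrow> nat \<Rightarrow> nat set" where "PN m i = {j. j < m \<and> path_E i j}"

lemma PN_eq: "PN m i = {j. j < m \<and> (j = i + 1 \<or> j + 1 = i)}"
  by (auto simp: PN_def path_E_def)

lemma refl_nth: "2 \<le> length xs \<Longrightarrow> k \<le> length xs + 1 \<Longrightarrow>
  refl xs ! k = (if k = 0 then xs!1 else if k \<le> length xs then xs!(k-1) else xs!(length xs - 2))"
  by (cases k) (auto simp: refl_def nth_append)

lemma nbr_set: assumes "2 \<le> length xs" "i < length xs"
  shows "{refl xs ! i, refl xs ! (i+2)} = (!) xs ` PN (length xs) i"
proof -
  let ?m = "length xs"
  have r1: "refl xs ! i = (if i = 0 then xs!1 else xs!(i-1))" using assms refl_nth[of xs i] by auto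
  have r2: "refl xs ! (i+2) = (if i + 1 < ?m then xs!(i+1) else xs!(?m - 2))" using assms refl_nth[of xs "i+2"] by auto
  show ?thesis
  proof (cases "i = 0")
    case True
    have "PN ?m i = {1}" using True assms by (auto simp: PN_eq)
    then show ?thesis using True r1 r2 assms by auto
  next
    case F: False
    show ?thesis
    proof (cases "i + 1 < ?m")
      case True
      have "PN ?m i = {i-1, i+1}" using True F assms by (auto simp: PN_eq)
      then show ?thesis using True F r1 r2 by auto
    next
      case False
      then have "i = ?m - 1" using assms by simp
      then have "PN ?m i = {i-1}" using F assms by (auto simp: PN_eq)
      moreover have "?m - 2 = i - 1" using \<open>i = ?m - 1\<close> by simp
      ultimately show ?thesis using False F r1 r2 by auto
    qed
  qed
qed

lemma valid_inj:
  assumes v: "valid xs"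
  shows "inj_on (\<lambda>i. (xs!i, (!) xs ` PN (length xs) i)) {0..<length xs}"
proof (rule inj_onI)
  fix i j assume i: "i \<in> {0..<length xs}" and j: "j \<in> {0..<length xs}"
    and e: "(xs!i, (!) xs ` PN (length xs) i) = (xs!j, (!) xs ` PN (length xs) j)"
  let ?L = "refl xs"
  have l2: "2 \<le> length xs" using v by (simp add: valid_def)
  have lL: "length ?L = length xs + 2" by (simp add: refl_def)
  have lw: "length (win ?L) = length xs" using lL win_length[of ?L] by simp
  have d: "distinct (map nrm (win ?L))" using v by (simp add: valid_def)
  have key: "map nrm (win ?L) ! k = (xs!k, (!) xs ` PN (length xs) k)" if "k < length xs" for k
  proof -
    have "win ?L ! k = (?L!k, ?L!(k+1), ?L!(k+2))" using that lL by (intro win_nth) simp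
    moreover have "?L!(k+1) = xs!k" using that l2 refl_nth[of xs "k+1"] by simp
    ultimately show ?thesis using that lw nbr_set[OF l2 that] by simp
  qed
  have eq: "map nrm (win ?L) ! i = map nrm (win ?L) ! j" using key i j e by simp
  have ij: "i < length (map nrm (win ?L))" "j < length (map nrm (win ?L))" using i j lw by simp_all
  show "i = j" using nth_eq_iff_index_eq[OF d ij] eq by blast
qed

lemma card_small_subsets:
  assumes "finite X"
  shows "card {S. S \<subseteq> X \<and> (card S = 1 \<or> card S = 2)} = card X + (card X choose 2)"
proof -
  have e: "{S. S \<subseteq> X \<and> (card S = 1 \<or> card S = 2)} = {S. S \<subseteq> X \<and> card S = 1} \<union> {S. S \<subseteq> X \<and> card S = 2}" by auto
  have f1: "finite {S. S \<subseteq> X \<and> card S = 1}" using assms by (rule rev_finite_subset[OF finite_Pow_iff[THEN iffD2]]) auto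
  have f2: "finite {S. S \<subseteq> X \<and> card S = 2}" using assms by (rule rev_finite_subset[OF finite_Pow_iff[THEN iffD2]]) auto
  have "card ({S. S \<subseteq> X \<and> card S = 1} \<union> {S. S \<subseteq> X \<and> card S = 2}) = card {S. S \<subseteq> X \<and> card S = 1} + card {S. S \<subseteq> X \<and> card S = 2}"
    by (rule card_Un_disjoint[OF f1 f2]) auto
  then show ?thesis unfolding e using n_subsets[OF assms, of 1] n_subsets[OF assms, of 2] by simp
qed

lemma two_choose: "2 * (x choose 2) = x * (x - 1)"
proof (induction x)
  case (Suc x)
  have "Suc x choose 2 = x + (x choose 2)"
    using binomial_Suc_Suc[of x 1] by (simp add: numeral_2_eq_2)
  then show ?case using Suc by (cases x) (auto simp: algebra_simps)
qed simp

lemma count_bound: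
  assumes m2: "2 \<le> m"
    and inj: "inj_on (\<lambda>i. (g i, g ` PN m i)) {0..<m}"
    and pr: "\<forall>i<m. \<forall>j<m. path_E i j \<longrightarrow> g i \<noteq> g j"
  shows "2*m \<le> (card (g ` {0..<m}))^2 * (card (g ` {0..<m}) - 1)"
proof -
  define A where "A = g ` {0..<m}"
  define t where "t = card A"
  define F where "F = (SIGMA c:A. {S. S \<subseteq> A - {c} \<and> (card S = 1 \<or> card S = 2)})"
  have fA: "finite A" by (simp add: A_def)
  have "A \<noteq> {}" using m2 by (auto simp: A_def)
  then have t1: "t \<ge> 1" using fA by (simp add: t_def card_gt_0_iff Suc_le_eq)
  have into: "(\<lambda>i. (g i, g ` PN m i)) ` {0..<m} \<subseteq> F"
  proof
    fix y assume "y \<in> (\<lambda>i. (g i, g ` PN m i)) ` {0..<m}"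
    then obtain i where i: "i < m" "y = (g i, g ` PN m i)" by auto
    have s1: "g ` PN m i \<subseteq> A - {g i}"
    proof
      fix y assume "y \<in> g ` PN m i"
      then obtain j where j: "j < m" "path_E i j" "y = g j" by (auto simp: PN_def)
      have "g i \<noteq> g j" using pr i(1) j(1,2) by blast
      then show "y \<in> A - {g i}" using j by (auto simp: A_def)
    qed
    have fin: "finite (PN m i)" by (simp add: PN_def)
    have ne: "PN m i \<noteq> {}"
    proof (cases "i + 1 < m")
      case True then have "i+1 \<in> PN m i" by (simp add: PN_eq)
      then show ?thesis by auto
    next
      case False then have "i - 1 \<in> PN m i" using m2 i(1) by (simp add: PN_eq)
      then show ?thesis by auto
    qed
    have "PN m i \<subseteq> {i+1, i-1}" by (auto simp: PN_eq)
    then have "card (PN m i) \<le> card {i+1, i-1}" by (intro card_mono) auto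
    also have "\<dots> \<le> 2" by (simp add: card_insert_if)
    finally have c2: "card (g ` PN m i) \<le> 2" using card_image_le[OF fin, of g] by linarith
    have c1: "card (g ` PN m i) \<ge> 1" using ne fin by (simp add: card_gt_0_iff Suc_le_eq)
    have "card (g ` PN m i) = 1 \<or> card (g ` PN m i) = 2" using c1 c2 by linarith
    moreover have "g i \<in> A" using i(1) by (auto simp: A_def)
    ultimately show "y \<in> F" using s1 i(2) by (auto simp: F_def)
  qed
  have fF: "finite F" unfolding F_def using fA by (intro finite_SigmaI) auto
  have "m \<le> card F"
    using card_inj_on_le[OF inj into fF] by simp
  also have "card F = (\<Sum>c\<in>A. card {S. S \<subseteq> A - {c} \<and> (card S = 1 \<or> card S = 2)})"
    unfolding F_def using fA by (intro card_SigmaI) auto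
  also have "\<dots> = (\<Sum>c\<in>A. (t-1) + ((t-1) choose 2))"
  proof (rule sum.cong)
    fix c assume "c \<in> A"
    then have "card (A - {c}) = t - 1" by (simp add: t_def fA)
    then show "card {S. S \<subseteq> A - {c} \<and> (card S = 1 \<or> card S = 2)} = (t-1) + ((t-1) choose 2)"
      using card_small_subsets[of "A - {c}"] fA by simp
  qed simp
  also have "\<dots> = t * ((t-1) + ((t-1) choose 2))" by (simp add: t_def)
  finally have mb: "m \<le> t * ((t-1) + ((t-1) choose 2))" .
  have ch: "2 * ((t-1) choose 2) = (t-1) * (t-2)"
    using two_choose[of "t-1"] by (simp add: numeral_2_eq_2)
  have "2*m \<le> 2 * (t * ((t-1) + ((t-1) choose 2)))" using mb by simp
  also have "\<dots> = t * (2*(t-1) + 2*((t-1) choose 2))"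
  proof -
    have "\<And>a c. 2 * (t * (a + c)) = t * (2*a + 2*(c::nat))" by (simp add: algebra_simps)
    then show ?thesis by blast
  qed
  also have "\<dots> = t * (2*(t-1) + (t-1)*(t-2))" using ch by simp
  also have "2*(t-1) + (t-1)*(t-2) = (t-1) * t"
  proof -
    obtain s where "t = Suc s" using t1 by (cases t) auto
    then show ?thesis by (cases s) (auto simp: algebra_simps)
  qed
  finally show ?thesis by (simp add: t_def A_def power2_eq_square algebra_simps)
qed



lemma walk1: "walk V E xs \<Longrightarrow> length xs = 1 \<Longrightarrow> hd xs = last xs"
  by (cases xs) auto

lemma walk2: "walk V E xs \<Longrightarrow> length xs = 2 \<Longrightarrow> E (hd xs) (last xs)"
  by (cases xs rule: remdups_adj.cases) auto

lemma gdist_val: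
  assumes u: "u \<in> V" and v: "v \<in> V"
    and common: "u \<noteq> v \<Longrightarrow> \<not> E u v \<Longrightarrow> \<exists>w\<in>V. E u w \<and> E w v"
  shows "gdist V E u v = (if u = v then 0 else if E u v then 1 else 2)"
proof -
  let ?P = "\<lambda>n. \<exists>xs. walk V E xs \<and> hd xs = u \<and> last xs = v \<and> length xs = n + 1"
  have n0: "\<not> ?P 0" if "u \<noteq> v" using that walk1 by fastforce
  have n1: "\<not> ?P 1" if "\<not> E u v" using that walk2[of V E] by (metis one_add_one)
  show ?thesis
  proof (cases "u = v")
    case True
    have "?P 0" by (rule exI[of _ "[u]"]) (simp add: u v True)
    then show ?thesis unfolding gdist_def using True by (intro Least_equality) auto
  next
    case F: False
    show ?thesis
    proof (cases "E u v")
      case True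
      have "?P 1" by (rule exI[of _ "[u,v]"]) (simp add: u v True)
      moreover have "\<forall>y. ?P y \<longrightarrow> 1 \<le> y"
      proof (intro allI impI)
        fix y assume "?P y"
        then have "y \<noteq> 0" using n0[OF F] by auto
        then show "1 \<le> y" by simp
      qed
      ultimately have "(LEAST n. ?P n) = 1" by (intro Least_equality) auto
      then show ?thesis unfolding gdist_def using F True by simp
    next
      case False
      obtain w where w: "w \<in> V" "E u w" "E w v" using common F False by blast
      have "?P 2" by (rule exI[of _ "[u,w,v]"]) (simp add: u v w)
      moreover have "\<forall>y. ?P y \<longrightarrow> 2 \<le> y"
      proof (intro allI impI)
        fix y assume "?P y"
        then have "y \<noteq> 0" "y \<noteq> 1" using n0[OF F] n1[OF False] by auto
        then show "2 \<le> y" by simp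
      qed
      ultimately have "(LEAST n. ?P n) = 2" by (intro Least_equality) auto
      then show ?thesis unfolding gdist_def using F False by simp
    qed
  qed
qed

lemma setdist_val:
  assumes v: "v \<in> V" and S: "S \<subseteq> V" "S \<noteq> {}" "finite S"
    and common: "\<And>u w. u \<in> V \<Longrightarrow> w \<in> V \<Longrightarrow> u \<noteq> w \<Longrightarrow> \<not> E u w \<Longrightarrow> \<exists>x\<in>V. E u x \<and> E x w"
  shows "setdist V E v S = (if v \<in> S then 0 else if \<exists>u\<in>S. E v u then 1 else 2)"
proof -
  have g: "gdist V E v u = (if v = u then 0 else if E v u then 1 else 2)" if "u \<in> S" for u
    using gdist_val[OF v, of u E] S(1) that common[of v u] v by auto
  show ?thesis unfolding setdist_def
  proof (rule Min_eqI)
    show "finite (gdist V E v ` S)" using S by simp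
  next
    fix y assume "y \<in> gdist V E v ` S"
    then obtain u where u: "u \<in> S" "y = gdist V E v u" by auto
    show "(if v \<in> S then 0 else if \<exists>u\<in>S. E v u then 1 else 2) \<le> y"
      using g[OF u(1)] u by auto
  next
    show "(if v \<in> S then 0 else if \<exists>u\<in>S. E v u then 1 else 2) \<in> gdist V E v ` S"
    proof (cases "v \<in> S")
      case True then show ?thesis using g[OF True] by force
    next
      case F: False
      show ?thesis
      proof (cases "\<exists>u\<in>S. E v u")
        case True
        then obtain u where "u \<in> S" "E v u" by blast
        then show ?thesis using g[of u] F by force
      next
        case False
        obtain u where u: "u \<in> S" using S(2) by blast
        then have "v \<noteq> u" "\<not> E v u" using F False by auto
        then show ?thesis using g[OF u] u F False by force
      qed
    qed
  qed
qed

definition nbh :: "'a set \<Rightarrow> ('a \<Rightarrow> 'a \<Rightarrow> bool) \<Rightarrow> 'a \<Rightarrow> 'a set" where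
  "nbh V E v = {u\<in>V. E v u}"

lemma code_val:
  assumes pc: "proper_coloring V E k f" and v: "v \<in> V" and fin: "finite V"
    and common: "\<And>u w. u \<in> V \<Longrightarrow> w \<in> V \<Longrightarrow> u \<noteq> w \<Longrightarrow> \<not> E u w \<Longrightarrow> \<exists>x\<in>V. E u x \<and> E x w"
  shows "color_code V E k f v = map (\<lambda>i. if f v = i then 0 else if i \<in> f ` nbh V E v then 1 else 2) [1..<k+1]"
proof -
  have "setdist V E v (color_class V f i) = (if f v = i then 0 else if i \<in> f ` nbh V E v then 1 else 2)"
    if i: "i \<in> {1..k}" for i
  proof -
    have "i \<in> f ` V" using pc i by (simp add: proper_coloring_def)
    then have ne: "color_class V f i \<noteq> {}" by (auto simp: color_class_def)
    have "setdist V E v (color_class V f i) = (if v \<in> color_class V f i then 0 else if \<exists>u\<in>color_class V f i. E v u then 1 else 2)"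
      by (rule setdist_val[OF v _ ne _ common]) (use fin in \<open>auto simp: color_class_def\<close>)
    then show ?thesis using v by (auto simp: color_class_def nbh_def)
  qed
  then show ?thesis unfolding color_code_def by (intro map_cong) auto
qed

definition vl :: "nat \<Rightarrow> nat set \<Rightarrow> nat \<Rightarrow> nat" where
  "vl c S i = (if c = i then 0 else if i \<in> S then 1 else 2)"

lemma vl0: "vl c S i = 0 \<longleftrightarrow> c = i" by (simp add: vl_def)
lemma vl1: "vl c S i = 1 \<longleftrightarrow> c \<noteq> i \<and> i \<in> S" by (simp add: vl_def)

lemma code_inj:
  assumes "c \<in> {1..k}" "S \<subseteq> {1..k}" "c \<notin> S" "c' \<in> {1..k}" "S' \<subseteq> {1..k}" "c' \<notin> S'"
    and e: "map (vl c S) [1..<k+1] = map (vl c' S') [1..<k+1]"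
  shows "c = c' \<and> S = S'"
proof -
  have e0: "\<forall>i\<in>set [1..<k+1]. vl c S i = vl c' S' i"
    using e by (simp only: map_eq_conv)
  have st: "set [1..<k+1] = {1..k}" by auto
  have e': "\<And>i. i \<in> {1..k} \<Longrightarrow> vl c S i = vl c' S' i"
    using e0 unfolding st by blast
  have "vl c' S' c = 0" using e'[OF assms(1)] vl0[of c S c] by simp
  then have cc: "c = c'" by (simp add: vl0)
  have "i \<in> S \<longleftrightarrow> i \<in> S'" if i: "i \<in> {1..k}" for i
  proof -
    have "i \<in> S \<longleftrightarrow> vl c S i = 1" using assms(3) by (auto simp: vl_def)
    also have "\<dots> \<longleftrightarrow> vl c' S' i = 1" using e'[OF i] by simp
    also have "\<dots> \<longleftrightarrow> i \<in> S'" using assms(6) by (auto simp: vl_def)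
    finally show ?thesis .
  qed
  then have "S = S'" using assms(2,5) by blast
  with cc show ?thesis by simp
qed

lemma loc_iff:
  assumes pc: "proper_coloring V E k f" and fin: "finite V"
    and common: "\<And>u w. u \<in> V \<Longrightarrow> w \<in> V \<Longrightarrow> u \<noteq> w \<Longrightarrow> \<not> E u w \<Longrightarrow> \<exists>x\<in>V. E u x \<and> E x w"
  shows "locating_coloring V E k f \<longleftrightarrow> inj_on (\<lambda>v. (f v, f ` nbh V E v)) V"
proof -
  have P: "color_code V E k f v = color_code V E k f w \<longleftrightarrow> (f v, f ` nbh V E v) = (f w, f ` nbh V E w)"
    if v: "v \<in> V" and w: "w \<in> V" for v w
  proof
    assume "color_code V E k f v = color_code V E k f w"
    moreover have "color_code V E k f v = map (vl (f v) (f ` nbh V E v)) [1..<k+1]"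
      unfolding vl_def by (rule code_val[OF pc v fin common])
    moreover have "color_code V E k f w = map (vl (f w) (f ` nbh V E w)) [1..<k+1]"
      unfolding vl_def by (rule code_val[OF pc w fin common])
    ultimately have e: "map (vl (f v) (f ` nbh V E v)) [1..<k+1] = map (vl (f w) (f ` nbh V E w)) [1..<k+1]"
      by simp
    have r: "f x \<in> {1..k}" "f ` nbh V E x \<subseteq> {1..k}" "f x \<notin> f ` nbh V E x" if "x \<in> V" for x
      using pc that by (auto simp: proper_coloring_def nbh_def)
    show "(f v, f ` nbh V E v) = (f w, f ` nbh V E w)"
      using code_inj[OF r(1)[OF v] r(2)[OF v] r(3)[OF v] r(1)[OF w] r(2)[OF w] r(3)[OF w] e] by simp
  next
    assume "(f v, f ` nbh V E v) = (f w, f ` nbh V E w)"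
    then have a: "f v = f w" and b: "f ` nbh V E v = f ` nbh V E w" by auto
    show "color_code V E k f v = color_code V E k f w"
    proof -
      have "color_code V E k f v = map (vl (f v) (f ` nbh V E v)) [1..<k+1]"
        unfolding vl_def by (rule code_val[OF pc v fin common])
      moreover have "color_code V E k f w = map (vl (f w) (f ` nbh V E w)) [1..<k+1]"
        unfolding vl_def by (rule code_val[OF pc w fin common])
      ultimately show ?thesis using a b by simp
    qed
  qed
  show ?thesis unfolding locating_coloring_def inj_on_def using pc P by auto
qed



abbreviation "JV m n \<equiv> join_V (path_V m) (path_V n)"
abbreviation "JE \<equiv> join_E path_E path_E"

lemma JV_Inl[simp]: "Inl i \<in> JV m n \<longleftrightarrow> i < m"
  by (auto simp: join_V_def path_V_def)
lemma JV_Inr[simp]: "Inr j \<in> JV m n \<longleftrightarrow> j < n"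
  by (auto simp: join_V_def path_V_def)
lemma JV_fin: "finite (JV m n)"
  by (simp add: join_V_def path_V_def)
lemma JV_eq: "JV m n = Inl ` {0..<m} \<union> Inr ` {0..<n}"
  by (simp add: join_V_def path_V_def)

lemma common_join:
  assumes "1 \<le> m" "1 \<le> n" "u \<in> JV m n" "w \<in> JV m n" "u \<noteq> w" "\<not> JE u w"
  shows "\<exists>x\<in>JV m n. JE u x \<and> JE x w"
proof (cases u)
  case (Inl i)
  then show ?thesis using assms by (cases w) (auto intro!: bexI[of _ "Inr 0"])
next
  case (Inr j)
  then show ?thesis using assms by (cases w) (auto intro!: bexI[of _ "Inl 0"])
qed

lemma nbh_Inl: "nbh (JV m n) JE (Inl i) = Inl ` PN m i \<union> Inr ` {0..<n}"
proof -
  have "nbh (JV m n) JE (Inl i) = {u \<in> JV m n. JE (Inl i) u}" by (simp add: nbh_def)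
  also have "\<dots> = Inl ` PN m i \<union> Inr ` {0..<n}"
  proof (rule set_eqI)
    fix u show "u \<in> {u \<in> JV m n. JE (Inl i) u} \<longleftrightarrow> u \<in> Inl ` PN m i \<union> Inr ` {0..<n}"
      by (cases u) (auto simp: PN_def)
  qed
  finally show ?thesis .
qed

lemma nbh_Inr: "nbh (JV m n) JE (Inr j) = Inr ` PN n j \<union> Inl ` {0..<m}"
proof -
  have "nbh (JV m n) JE (Inr j) = {u \<in> JV m n. JE (Inr j) u}" by (simp add: nbh_def)
  also have "\<dots> = Inr ` PN n j \<union> Inl ` {0..<m}"
  proof (rule set_eqI)
    fix u show "u \<in> {u \<in> JV m n. JE (Inr j) u} \<longleftrightarrow> u \<in> Inr ` PN n j \<union> Inl ` {0..<m}"
      by (cases u) (auto simp: PN_def)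
  qed
  finally show ?thesis .
qed

lemma lower:
  assumes m2: "2 \<le> m" and n2: "2 \<le> n" and loc: "locating_coloring (JV m n) JE k f"
  shows "\<exists>a b. a + b = k \<and> 2*m \<le> a^2*(a-1) \<and> 2*n \<le> b^2*(b-1)"
proof -
  have pc: "proper_coloring (JV m n) JE k f" using loc by (simp add: locating_coloring_def)
  have com: "\<And>u w. u \<in> JV m n \<Longrightarrow> w \<in> JV m n \<Longrightarrow> u \<noteq> w \<Longrightarrow> \<not> JE u w \<Longrightarrow> \<exists>x\<in>JV m n. JE u x \<and> JE x w"
    using common_join m2 n2 by simp
  have inj: "inj_on (\<lambda>v. (f v, f ` nbh (JV m n) JE v)) (JV m n)"
    using loc_iff[OF pc JV_fin com] loc by simp
  have adj: "\<And>u v. u \<in> JV m n \<Longrightarrow> v \<in> JV m n \<Longrightarrow> JE u v \<Longrightarrow> f u \<noteq> f v"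
    using pc by (simp add: proper_coloring_def)
  define A where "A = (f \<circ> Inl) ` {0..<m}"
  define B where "B = (f \<circ> Inr) ` {0..<n}"
  have bA: "2*m \<le> (card A)^2*(card A - 1)" unfolding A_def
  proof (rule count_bound[OF m2])
    show "inj_on (\<lambda>i. ((f \<circ> Inl) i, (f \<circ> Inl) ` PN m i)) {0..<m}"
    proof (rule inj_onI)
      fix i j assume i: "i \<in> {0..<m}" and j: "j \<in> {0..<m}"
        and e: "((f \<circ> Inl) i, (f \<circ> Inl) ` PN m i) = ((f \<circ> Inl) j, (f \<circ> Inl) ` PN m j)"
      have "f ` nbh (JV m n) JE (Inl i) = f ` nbh (JV m n) JE (Inl j)"
        using e unfolding nbh_Inl image_Un image_comp by simp
      then have "Inl i = (Inl j :: nat + nat)"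
        by (intro inj_onD[OF inj]) (use e i j in auto)
      then show "i = j" by simp
    qed
    show "\<forall>i<m. \<forall>j<m. path_E i j \<longrightarrow> (f \<circ> Inl) i \<noteq> (f \<circ> Inl) j"
      using adj by simp
  qed
  have bB: "2*n \<le> (card B)^2*(card B - 1)" unfolding B_def
  proof (rule count_bound[OF n2])
    show "inj_on (\<lambda>i. ((f \<circ> Inr) i, (f \<circ> Inr) ` PN n i)) {0..<n}"
    proof (rule inj_onI)
      fix i j assume i: "i \<in> {0..<n}" and j: "j \<in> {0..<n}"
        and e: "((f \<circ> Inr) i, (f \<circ> Inr) ` PN n i) = ((f \<circ> Inr) j, (f \<circ> Inr) ` PN n j)"
      have "f ` nbh (JV m n) JE (Inr i) = f ` nbh (JV m n) JE (Inr j)"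
        using e unfolding nbh_Inr image_Un image_comp by simp
      then have "Inr i = (Inr j :: nat + nat)"
        by (intro inj_onD[OF inj]) (use e i j in auto)
      then show "i = j" by simp
    qed
    show "\<forall>i<n. \<forall>j<n. path_E i j \<longrightarrow> (f \<circ> Inr) i \<noteq> (f \<circ> Inr) j"
      using adj by simp
  qed
  have U: "A \<union> B = {1..k}"
  proof -
    have "f ` JV m n = {1..k}" using pc by (simp add: proper_coloring_def)
    moreover have "f ` JV m n = A \<union> B" by (auto simp: JV_eq A_def B_def)
    ultimately show ?thesis by simp
  qed
  have D: "A \<inter> B = {}"
  proof (rule equals0I)
    fix c assume "c \<in> A \<inter> B"
    then obtain i j where "i < m" "j < n" "c = f (Inl i)" "c = f (Inr j)" by (auto simp: A_def B_def)
    then show False using adj[of "Inl i" "Inr j"] by simp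
  qed
  have "card A + card B = k"
    using card_Un_disjoint[of A B] D U by (simp add: A_def B_def)
  then show ?thesis using bA bB by blast
qed

lemma upper:
  assumes vx: "valid xs" and lx: "length xs = m" and sx: "set xs = {1..a}"
    and vy: "valid ys" and ly: "length ys = n" and sy: "set ys = {1..b}"
  shows "locating_coloring (JV m n) JE (a+b) (case_sum (\<lambda>i. xs!i) (\<lambda>j. a + ys!j))"
proof -
  define f where "f = case_sum (\<lambda>i. xs!i) (\<lambda>j. a + ys!j)"
  have m2: "2 \<le> m" using vx lx by (simp add: valid_def)
  have n2: "2 \<le> n" using vy ly by (simp add: valid_def)
  have com: "\<And>u w. u \<in> JV m n \<Longrightarrow> w \<in> JV m n \<Longrightarrow> u \<noteq> w \<Longrightarrow> \<not> JE u w \<Longrightarrow> \<exists>x\<in>JV m n. JE u x \<and> JE x w"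
    using common_join m2 n2 by simp
  have xr: "xs!i \<in> {1..a}" if "i < m" for i using sx lx that nth_mem[of i xs] by auto
  have yr: "ys!j \<in> {1..b}" if "j < n" for j using sy ly that nth_mem[of j ys] by auto
  have "(\<lambda>i. xs!i) ` {0..<m} = set xs" using lx by (auto simp: set_conv_nth)
  then have imx: "(\<lambda>i. xs!i) ` {0..<m} = {1..a}" using sx by simp
  have imy: "(\<lambda>j. a + ys!j) ` {0..<n} = {a+1..a+b}"
  proof -
    have "(\<lambda>j. ys!j) ` {0..<n} = set ys" using ly by (auto simp: set_conv_nth)
    then have "(\<lambda>j. ys!j) ` {0..<n} = {1..b}" using sy by simp
    then have "(\<lambda>j. a + ys!j) ` {0..<n} = (\<lambda>x. a + x) ` {1..b}" by (simp add: image_image[symmetric])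
    then show ?thesis by (simp add: add.commute)
  qed
  have sx2: "successively (\<noteq>) xs" using vx by (simp add: valid_def)
  have sy2: "successively (\<noteq>) ys" using vy by (simp add: valid_def)
  have px: "xs!i \<noteq> xs!j" if "i < m" "j < m" "path_E i j" for i j
    using that successively_nth[OF sx2, of i] successively_nth[OF sx2, of j] lx by (auto simp: path_E_def)
  have py: "ys!i \<noteq> ys!j" if "i < n" "j < n" "path_E i j" for i j
    using that successively_nth[OF sy2, of i] successively_nth[OF sy2, of j] ly by (auto simp: path_E_def)
  have pc: "proper_coloring (JV m n) JE (a+b) f"
    unfolding proper_coloring_def
  proof
    have "f ` JV m n = (\<lambda>i. xs!i) ` {0..<m} \<union> (\<lambda>j. a + ys!j) ` {0..<n}"
      by (auto simp: JV_eq f_def image_Un image_image)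
    also have "\<dots> = {1..a+b}" using imx imy by auto
    finally show "f ` JV m n = {1..a+b}" .
  next
    show "\<forall>u\<in>JV m n. \<forall>v\<in>JV m n. JE u v \<longrightarrow> f u \<noteq> f v"
    proof (intro ballI impI)
      fix u v assume u: "u \<in> JV m n" and v: "v \<in> JV m n" and e: "JE u v"
      show "f u \<noteq> f v"
      proof (cases u; cases v)
        fix i j assume "u = Inl i" "v = Inl j" then show ?thesis using u v e px by (simp add: f_def)
      next
        fix i j assume "u = Inl i" "v = Inr j" then show ?thesis using u v xr[of i] yr[of j] by (simp add: f_def)
      next
        fix i j assume "u = Inr i" "v = Inl j" then show ?thesis using u v xr[of j] yr[of i] by (simp add: f_def)
      next
        fix i j assume "u = Inr i" "v = Inr j" then show ?thesis using u v e py by (simp add: f_def)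
      qed
    qed
  qed
  have injx: "inj_on (\<lambda>i. (xs!i, (!) xs ` PN m i)) {0..<m}" using valid_inj[OF vx] lx by simp
  have injy: "inj_on (\<lambda>i. (ys!i, (!) ys ` PN n i)) {0..<n}" using valid_inj[OF vy] ly by simp
  have PNm: "PN m i \<subseteq> {0..<m}" for i by (auto simp: PN_def)
  have PNn: "PN n i \<subseteq> {0..<n}" for i by (auto simp: PN_def)
  have nl: "f ` nbh (JV m n) JE (Inl i) = (!) xs ` PN m i \<union> {a+1..a+b}" for i
    unfolding nbh_Inl image_Un image_image using imy by (simp add: f_def)
  have nr: "f ` nbh (JV m n) JE (Inr i) = (\<lambda>j. a + ys!j) ` PN n i \<union> {1..a}" for i
    unfolding nbh_Inr image_Un image_image using imx by (simp add: f_def)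
  have inj: "inj_on (\<lambda>v. (f v, f ` nbh (JV m n) JE v)) (JV m n)"
  proof (rule inj_onI)
    fix u v assume u: "u \<in> JV m n" and v: "v \<in> JV m n"
      and e: "(f u, f ` nbh (JV m n) JE u) = (f v, f ` nbh (JV m n) JE v)"
    show "u = v"
    proof (cases u; cases v)
      fix i j assume uv: "u = Inl i" "v = Inl j"
      have i: "i < m" and j: "j < m" using u v uv by auto
      have lo: "(!) xs ` PN m i \<subseteq> {1..a}" "(!) xs ` PN m j \<subseteq> {1..a}" using xr PNm by fastforce+
      have "(!) xs ` PN m i \<union> {a+1..a+b} = (!) xs ` PN m j \<union> {a+1..a+b}" using e uv nl by simp
      then have "((!) xs ` PN m i \<union> {a+1..a+b}) \<inter> {..a} = ((!) xs ` PN m j \<union> {a+1..a+b}) \<inter> {..a}" by simp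
      moreover have cut: "(X \<union> {a+1..a+b}) \<inter> {..a} = X" if "X \<subseteq> {1..a}" for X :: "nat set" using that by auto
      ultimately have "(!) xs ` PN m i = (!) xs ` PN m j" using cut[OF lo(1)] cut[OF lo(2)] by simp
      moreover have "xs!i = xs!j" using e uv by (simp add: f_def)
      ultimately have "i = j" using injx i j by (auto simp: inj_on_def)
      then show ?thesis using uv by simp
    next
      fix i j assume uv: "u = Inl i" "v = Inr j"
      then show ?thesis using e u v xr[of i] yr[of j] by (simp add: f_def)
    next
      fix i j assume uv: "u = Inr i" "v = Inl j"
      then show ?thesis using e u v xr[of j] yr[of i] by (simp add: f_def)
    next
      fix i j assume uv: "u = Inr i" "v = Inr j"
      have i: "i < n" and j: "j < n" using u v uv by auto
      have hi: "(\<lambda>j. a + ys!j) ` PN n i \<subseteq> {a+1..a+b}" "(\<lambda>j. a + ys!j) ` PN n j \<subseteq> {a+1..a+b}"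
        using yr PNn by fastforce+
      have "(\<lambda>j. a + ys!j) ` PN n i \<union> {1..a} = (\<lambda>j. a + ys!j) ` PN n j \<union> {1..a}" using e uv nr by simp
      then have "((\<lambda>j. a + ys!j) ` PN n i \<union> {1..a}) \<inter> {a+1..} = ((\<lambda>j. a + ys!j) ` PN n j \<union> {1..a}) \<inter> {a+1..}" by simp
      moreover have cut: "(X \<union> {1..a}) \<inter> {a+1..} = X" if "X \<subseteq> {a+1..a+b}" for X :: "nat set" using that by auto
      ultimately have "(\<lambda>j. a + ys!j) ` PN n i = (\<lambda>j. a + ys!j) ` PN n j" using cut[OF hi(1)] cut[OF hi(2)] by simp
      then have "(\<lambda>x. a + x) ` ((!) ys ` PN n i) = (\<lambda>x. a + x) ` ((!) ys ` PN n j)" by (simp add: image_image)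
      then have "(!) ys ` PN n i = (!) ys ` PN n j" by (simp add: inj_image_eq_iff inj_on_def)
      moreover have "ys!i = ys!j" using e uv by (simp add: f_def)
      ultimately have "i = j" using injy i j by (auto simp: inj_on_def)
      then show ?thesis using uv by simp
    qed
  qed
  show ?thesis using loc_iff[OF pc JV_fin com] inj by (simp add: f_def)
qed



lemma real_iff: "(real m \<le> (real k ^ 3 - real k ^ 2) / 2) \<longleftrightarrow> 2*m \<le> k^2*(k-1)"
proof (cases k)
  case 0 then show ?thesis by simp
next
  case (Suc j)
  have "real (k^2*(k-1)) = real k ^ 3 - real k ^ 2"
    using Suc by (simp add: power2_eq_square power3_eq_cube algebra_simps)
  then have "(real m \<le> (real k ^ 3 - real k ^ 2) / 2) \<longleftrightarrow> real (2*m) \<le> real (k^2*(k-1))" by (simp add: mult.commute)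
  then show ?thesis by (simp only: of_nat_le_iff)
qed

lemma valid_prop: "valid xs \<Longrightarrow> \<forall>i<length xs. \<forall>j<length xs. path_E i j \<longrightarrow> xs!i \<noteq> xs!j"
proof (intro allI impI)
  fix i j assume v: "valid xs" and i: "i < length xs" and j: "j < length xs" and p: "path_E i j"
  have s: "successively (\<noteq>) xs" using v by (simp add: valid_def)
  show "xs!i \<noteq> xs!j" using p successively_nth[OF s, of i] successively_nth[OF s, of j] i j
    by (auto simp: path_E_def)
qed

lemma valid_set:
  assumes v: "valid xs" and s: "set xs \<subseteq> {1..M}" and M: "M = (LEAST k. 2*length xs \<le> k^2*(k-1))"
  shows "set xs = {1..M}"
proof -
  have l2: "2 \<le> length xs" using v by (simp add: valid_def)
  have im: "(\<lambda>i. xs!i) ` {0..<length xs} = set xs" by (auto simp: set_conv_nth)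
  have "2*length xs \<le> (card ((\<lambda>i. xs!i) ` {0..<length xs}))^2 * (card ((\<lambda>i. xs!i) ` {0..<length xs}) - 1)"
    by (rule count_bound[OF l2 valid_inj[OF v] valid_prop[OF v]])
  then have "2*length xs \<le> (card (set xs))^2 * (card (set xs) - 1)" using im by simp
  then have "M \<le> card (set xs)" unfolding M by (rule Least_le)
  moreover have "card (set xs) \<le> M" using card_mono[OF _ s] by simp
  ultimately have "card (set xs) = card {1..M}" by simp
  then show ?thesis using card_subset_eq[OF _ s] by simp
qed

lemma least_props:
  assumes m2: "2 \<le> m" and M: "M = (LEAST k::nat. 2*m \<le> k^2*(k-1))"
  shows "2*m \<le> M^2*(M-1)" "2 \<le> M"
proof -
  have "2*m \<le> m^2*(m-1)"
  proof -
    have "m^2*1 \<le> m^2*(m-1)" using m2 by (intro mult_le_mono2) simp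
    moreover have "2*m \<le> m^2" using m2 by (simp add: power2_eq_square)
    ultimately show ?thesis by (metis mult.right_neutral le_trans)
  qed
  then show P: "2*m \<le> M^2*(M-1)" unfolding M by (rule LeastI)
  show "2 \<le> M"
  proof (rule ccontr)
    assume "\<not> 2 \<le> M"
    then have "M = 0 \<or> M = 1" by auto
    then show False using P m2 by auto
  qed
qed

theorem corollary3:
  fixes m n :: nat
  assumes "m \<ge> 2" and "n \<ge> 2"
  shows "locating_chromatic_number (join_V (path_V m) (path_V n)) (join_E path_E path_E)
       = (LEAST k::nat. real m \<le> (real k ^ 3 - real k ^ 2) / 2)
       + (LEAST k::nat. real n \<le> (real k ^ 3 - real k ^ 2) / 2)"
proof -
  define M where "M = (LEAST k::nat. 2*m \<le> k^2*(k-1))"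
  define N where "N = (LEAST k::nat. 2*n \<le> k^2*(k-1))"
  have eM: "(LEAST k::nat. real m \<le> (real k ^ 3 - real k ^ 2) / 2) = M" by (simp only: real_iff M_def)
  have eN: "(LEAST k::nat. real n \<le> (real k ^ 3 - real k ^ 2) / 2) = N" by (simp only: real_iff N_def)
  have PM: "2*m \<le> M^2*(M-1)" "2 \<le> M" using least_props[OF assms(1) M_def] by auto
  have PN': "2*n \<le> N^2*(N-1)" "2 \<le> N" using least_props[OF assms(2) N_def] by auto
  have "M - 2 + 2 = M" using PM(2) by simp
  then have QM: "Qk M" using Q_all[of "M-2"] by simp
  have "N - 2 + 2 = N" using PN'(2) by simp
  then have QN: "Qk N" using Q_all[of "N-2"] by simp
  obtain xs where xs: "valid xs" "length xs = m" "set xs \<subseteq> {1..M}" using QM PM assms(1) by (auto simp: Qk_def)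
  obtain ys where ys: "valid ys" "length ys = n" "set ys \<subseteq> {1..N}" using QN PN' assms(2) by (auto simp: Qk_def)
  have sx: "set xs = {1..M}" using valid_set[OF xs(1) xs(3)] xs(2) M_def by simp
  have sy: "set ys = {1..N}" using valid_set[OF ys(1) ys(3)] ys(2) N_def by simp
  have loc: "locating_coloring (JV m n) JE (M+N) (case_sum (\<lambda>i. xs!i) (\<lambda>j. M + ys!j))"
    by (rule upper[OF xs(1,2) sx ys(1,2) sy])
  have "(LEAST k. \<exists>f. locating_coloring (JV m n) JE k f) = M + N"
  proof (rule Least_equality)
    show "\<exists>f. locating_coloring (JV m n) JE (M+N) f" using loc by blast
  next
    fix k assume "\<exists>f. locating_coloring (JV m n) JE k f"
    then obtain f where f: "locating_coloring (JV m n) JE k f" by blast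
    obtain a b where ab: "a + b = k" "2*m \<le> a^2*(a-1)" "2*n \<le> b^2*(b-1)"
      using lower[OF assms f] by blast
    have "M \<le> a" unfolding M_def by (rule Least_le) (rule ab(2))
    moreover have "N \<le> b" unfolding N_def by (rule Least_le) (rule ab(3))
    ultimately show "M + N \<le> k" using ab(1) by simp
  qed
  then show ?thesis unfolding locating_chromatic_number_def eM eN .
qed


end
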